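(* For $\epsilon>0$ let $u_\epsilon$ be the convex global solution on $\mathbb{R}^3$ of $\det D^2u_\epsilon = 1+\epsilon(\delta_{e_3}+\delta_{-e_3})$ (in the Alexandrov sense) that is asymptotic to $|x|^2/2$, i.e. $u_\epsilon(x)-|x|^2/2\to0$ as $|x|\to\infty$. Then $u_\epsilon\to|x|^2/2$ locally uniformly as $\epsilon\to0$; consequently, for all sufficiently small $\epsilon>0$, $u_\epsilon$ is not affine on the segment joining $-e_3$ and $e_3$.
   Context: $e_3=(0,0,1)$; $\delta_p$ is the Dirac mass at $p$; $1$ denotes Lebesgue measure. Alexandrov sense: the Monge-Ampère measure $Mu(E)=|\partial u(E)|$ equals the given measure. *)

theory Defs
  imports "HOL-Analysis.Analysis"
begin

type_synonym R3 = "real ^ 3"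

definition e3 :: R3 where "e3 = axis 3 1"

definition subdiff :: "(R3 \<Rightarrow> real) \<Rightarrow> R3 \<Rightarrow> R3 set" where
  "subdiff u x = {p. \<forall>y. u y \<ge> u x + p \<bullet> (y - x)}"

definition subdiff_set :: "(R3 \<Rightarrow> real) \<Rightarrow> R3 set \<Rightarrow> R3 set" where
  "subdiff_set u E = (\<Union>x\<in>E. subdiff u x)"

text \<open>u is an Alexandrov solution of det D^2 u = 1 + eps(delta_{e3} + delta_{-e3}) on R^3:
  u convex, and for every Borel set E, the Monge-Ampere measure |\<partial>u(E)| equals
  the Lebesgue measure of E plus eps times the Dirac masses at e3 and -e3.\<close>
definition alexandrov_sol :: "real \<Rightarrow> (R3 \<Rightarrow> real) \<Rightarrow> bool" where
  "alexandrov_sol eps u \<longleftrightarrow> convex_on UNIV u \<and>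
     (\<forall>E\<in>sets borel. subdiff_set u E \<in> sets lebesgue \<and>
        emeasure lebesgue (subdiff_set u E) =
          emeasure lebesgue E + ennreal eps * (indicator E e3 + indicator E (- e3)))"

end

theory Submission
  imports Defs "HOL-Homology.Invariance_of_Domain"
begin

lemma n1: "(1::3) \<noteq> 2" by simp
lemma n2: "(1::3) \<noteq> 3" by simp
lemma n3: "(2::3) \<noteq> 3" by simp
lemma ax3: "axis i (1::real) $ j = (if j = i then 1 else 0)"
  by (simp add: axis_def)

lemma e: fixes X :: "real^3"
  shows "matrix (\<lambda>h. a *\<^sub>R h + (b * (X \<bullet> h)) *\<^sub>R X) $ i $ j = (if i = j then a else 0) + b * X$j * X$i"
  by (simp add: matrix_def inner_axis ax3)
lemma det_rank1: fixes X :: "real^3"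
  shows "det (matrix (\<lambda>h. a *\<^sub>R h + (b * (X \<bullet> h)) *\<^sub>R X)) = a^2 * (a + b * (X \<bullet> X))"
proof -
  have XX: "X \<bullet> X = X$1*X$1 + X$2*X$2 + X$3*X$3" by (simp add: inner_vec_def sum_3)
  have "det (matrix (\<lambda>h. a *\<^sub>R h + (b * (X \<bullet> h)) *\<^sub>R X)) =
     (a + b*X$1*X$1) * (a + b*X$2*X$2) * (a + b*X$3*X$3) +
     (b*X$2*X$1) * (b*X$3*X$2) * (b*X$1*X$3) +
     (b*X$3*X$1) * (b*X$1*X$2) * (b*X$2*X$3) -
     (a + b*X$1*X$1) * (b*X$3*X$2) * (b*X$2*X$3) -
     (b*X$2*X$1) * (b*X$1*X$2) * (a + b*X$3*X$3) -
     (b*X$3*X$1) * (a + b*X$2*X$2) * (b*X$1*X$3)"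
    unfolding det_3 e by (simp add: n1 n2 n3 n1[symmetric] n2[symmetric] n3[symmetric])
  also have "\<dots> = a^2 * (a + b * (X$1*X$1 + X$2*X$2 + X$3*X$3))"
    by (simp add: power2_eq_square algebra_simps)
  finally show ?thesis unfolding XX .
qed

definition gam :: "real \<Rightarrow> real \<Rightarrow> real" where "gam k r = k / (r * (1+r)^2)"

lemma gam_deriv: assumes "r > 0"
  shows "(gam k has_real_derivative (-k*(1+3*r)/(r^2*(1+r)^3))) (at r)"
proof -
  have dg: "((\<lambda>y. y*(1+y)^2) has_real_derivative ((1+r)^2 + r*(2*(1+r)))) (at r)"
    by (auto intro!: derivative_eq_intros simp: algebra_simps power2_eq_square)
  have nz: "r*(1+r)^2 \<noteq> 0" using assms by simp
  have "((\<lambda>y. k / (y*(1+y)^2)) has_real_derivative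
      ((0 * (r*(1+r)^2) - (((1+r)^2 + r*(2*(1+r))) * k)) / ((r*(1+r)^2) ^ Suc (Suc 0)))) (at r)"
    by (rule DERIV_quotient[OF DERIV_const dg nz])
  moreover have "(0 * (r*(1+r)^2) - (((1+r)^2 + r*(2*(1+r))) * k)) / ((r*(1+r)^2) ^ Suc (Suc 0))
      = -k*(1+3*r)/(r^2*(1+r)^3)"
  proof -
    have r1: "1 + r \<noteq> 0" using assms by simp
    have e1: "(0 * (r*(1+r)^2) - (((1+r)^2 + r*(2*(1+r))) * k)) = (-k*(1+3*r)) * (1+r)"
      by (simp add: algebra_simps power2_eq_square)
    have e2: "(r*(1+r)^2) ^ Suc (Suc 0) = (r^2*(1+r)^3) * (1+r)"
      by (simp add: algebra_simps power2_eq_square power3_eq_cube)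
    show ?thesis unfolding e1 e2 using r1 by (rule mult_divide_mult_cancel_right)
  qed
  ultimately show ?thesis unfolding gam_def[abs_def] by simp
qed

definition phi :: "real \<Rightarrow> real^3 \<Rightarrow> real^3 \<Rightarrow> real^3" where
  "phi k x0 x = x + gam k (norm (x - x0)) *\<^sub>R (x - x0)"

lemma aux: "h + (g *\<^sub>R h + (c * (h \<bullet> sgn X)) *\<^sub>R (X::real^3)) = (1+g) *\<^sub>R h + (c / norm X * (X \<bullet> h)) *\<^sub>R X"
  by (cases "X = 0") (auto simp: sgn_div_norm inner_commute field_simps)

lemma phi_deriv:
  fixes x x0 :: "real^3"
  assumes "x \<noteq> x0"
  defines "r \<equiv> norm (x - x0)"
  shows "(phi k x0 has_derivative
     (\<lambda>h. (1 + gam k r) *\<^sub>R h + ((-k*(1+3*r)/(r^2*(1+r)^3)) / r * ((x - x0) \<bullet> h)) *\<^sub>R (x - x0))) (at x)"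
proof -
  have r: "r > 0" using assms by (simp add: r_def)
  have dN: "((\<lambda>y. norm (y - x0)) has_derivative (\<lambda>h. h \<bullet> sgn (x - x0))) (at x)"
  proof -
    have "((\<lambda>y. y - x0) has_derivative (\<lambda>h. h)) (at x)"
      by (auto intro!: derivative_eq_intros)
    moreover have "(norm has_derivative (\<lambda>h. h \<bullet> sgn (x - x0))) (at (x - x0))"
      using has_derivative_norm[of "x - x0"] assms by (simp add: gderiv_def)
    ultimately show ?thesis using has_derivative_compose[of "\<lambda>y. y - x0" "\<lambda>h. h" x UNIV norm] by simp
  qed
  have dG: "((\<lambda>y. gam k (norm (y - x0))) has_derivative
       (\<lambda>h. (-k*(1+3*r)/(r^2*(1+r)^3)) * (h \<bullet> sgn (x - x0)))) (at x)"
  proof -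
    have "(gam k has_derivative (\<lambda>t. (-k*(1+3*r)/(r^2*(1+r)^3)) * t)) (at (norm (x - x0)))"
      using gam_deriv[OF r, of k] unfolding r_def has_field_derivative_def .
    then show ?thesis using has_derivative_compose[OF dN] by simp
  qed
  have "(phi k x0 has_derivative
     (\<lambda>h. h + (gam k (norm (x - x0)) *\<^sub>R h + ((-k*(1+3*r)/(r^2*(1+r)^3)) * (h \<bullet> sgn (x - x0))) *\<^sub>R (x - x0)))) (at x)"
    unfolding phi_def[abs_def]
    by (intro has_derivative_add has_derivative_ident has_derivative_scaleR dG) (auto intro!: derivative_eq_intros)
  moreover have "(\<lambda>h. h + (gam k (norm (x - x0)) *\<^sub>R h + ((-k*(1+3*r)/(r^2*(1+r)^3)) * (h \<bullet> sgn (x - x0))) *\<^sub>R (x - x0)))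
     = (\<lambda>h. (1 + gam k r) *\<^sub>R h + ((-k*(1+3*r)/(r^2*(1+r)^3)) / r * ((x - x0) \<bullet> h)) *\<^sub>R (x - x0))"
    unfolding r_def by (rule ext) (rule aux)
  ultimately show ?thesis by simp
qed

lemma t1: fixes r s k :: real assumes "r > 0" "s > 0" "s = 1 + r"
  shows "k/(r * s^2) + -k*(1+3*r)/(r * s^3) = -(2*k/s^3)"
proof -
  have "k/(r * s^2) + -k*(1+3*r)/(r * s^3) = (k * s - k*(1+3*r))/(r * s^3)"
    using assms(1,2) by (simp add: field_simps power2_eq_square power3_eq_cube)
  also have "k * s - k*(1+3*r) = -(2*k)*r" using assms(3) by (simp add: algebra_simps)
  also have "-(2*k)*r/(r * s^3) = -(2*k/s^3)" using assms(1,2) by simp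
  finally show ?thesis .
qed
lemma t2: fixes r t k :: real assumes "r \<noteq> 0"
  shows "(-k*t/(r^2 * s))/r*r^2 = -k*t/(r * s)"
  using assms by (simp add: field_simps power2_eq_square)

lemma t3: fixes r s k :: real assumes "r > 0" "s > 0" "s = 1 + r"
  shows "2*(k/(r * s^2)) - 2*k/s^3 - 2*(k/(r * s^2))*(2*k/s^3) = 2*k*(s^2 - 2*k)/(r * s^5)"
proof -
  have "2*(k/(r * s^2)) - 2*k/s^3 - 2*(k/(r * s^2))*(2*k/s^3) = (2*k* s^3 - 2*k*r* s^2 - 4*k^2)/(r * s^5)"
    using assms(1,2) by (simp add: field_simps power2_eq_square power3_eq_cube eval_nat_numeral)
  also have "2*k* s^3 - 2*k*r* s^2 - 4*k^2 = 2*k*(s^2 - 2*k)"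
    using assms(3) by (simp add: algebra_simps power2_eq_square power3_eq_cube)
  finally show ?thesis .
qed

lemma phi_det:
  fixes x x0 :: "real^3"
  assumes "x \<noteq> x0" "0 \<le> k" "k \<le> 1/2"
  defines "r \<equiv> norm (x - x0)"
  shows "det (matrix (\<lambda>h. (1 + gam k r) *\<^sub>R h + ((-k*(1+3*r)/(r^2*(1+r)^3)) / r * ((x - x0) \<bullet> h)) *\<^sub>R (x - x0))) \<ge> 1"
proof -
  have r: "r > 0" using assms by (simp add: r_def)
  have XX: "(x - x0) \<bullet> (x - x0) = r^2" by (simp add: r_def power2_norm_eq_inner)
  define A where "A = k / (r * (1+r)^2)"
  define B where "B = 2*k/(1+r)^3"
  have A0: "A \<ge> 0" using assms r by (simp add: A_def)
  have B1: "B \<le> 1"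
  proof -
    have "(1+r)^3 \<ge> 1" using r by simp
    moreover have p: "0 < (1+r)^3" using r by simp
    ultimately have "2*k/(1+r)^3 \<le> 2*k/1"
      using divide_left_mono[of 1 "(1+r)^3" "2*k"] assms(2) by simp
    then show ?thesis using assms by (simp add: B_def)
  qed
  have eq: "(1 + gam k r)^2 * ((1 + gam k r) + ((-k*(1+3*r)/(r^2*(1+r)^3)) / r) * r^2) = (1 + A)^2 * (1 - B)"
  proof -
    have g: "gam k r = A" by (simp add: gam_def A_def)
    have c1: "((-k*(1+3*r)/(r^2*(1+r)^3)) / r) * r^2 = -k*(1+3*r)/(r*(1+r)^3)"
      using t2[of r k "1+3*r" "(1+r)^3"] r by simp
    have c2: "A + -k*(1+3*r)/(r*(1+r)^3) = -B"
      using t1[of r "1+r" k] r unfolding A_def B_def by simp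
    have c3: "(1 + A) + -k*(1+3*r)/(r*(1+r)^3) = 1 - B" using c2 by linarith
    show ?thesis unfolding g c1 c3 ..
  qed
  have key: "2*A - B - 2*A*B \<ge> 0"
  proof -
    have "2*A - B - 2*A*B = 2*k*((1+r)^2 - 2*k) / (r*(1+r)^5)"
      using t3[of r "1+r" k] r unfolding A_def B_def by (simp add: mult.assoc)
    moreover have "(1+r)^2 - 2*k \<ge> 0"
    proof -
      have "(1+r)^2 \<ge> 1" using r by simp
      then show ?thesis using assms by linarith
    qed
    ultimately show ?thesis using assms r by simp
  qed
  have "(1 + A)^2 * (1 - B) \<ge> (1 + 2*A) * (1 - B)"
    using A0 B1 by (intro mult_right_mono) (auto simp: power2_eq_square algebra_simps)
  also have "(1 + 2*A) * (1 - B) = 1 + (2*A - B - 2*A*B)" by (simp add: algebra_simps)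
  finally have hyp: "(1 + A)^2 * (1 - B) \<ge> 1" using key by linarith
  have D: "det (matrix (\<lambda>h. (1 + gam k r) *\<^sub>R h + ((-k*(1+3*r)/(r^2*(1+r)^3)) / r * ((x - x0) \<bullet> h)) *\<^sub>R (x - x0)))
     = (1 + gam k r)^2 * ((1 + gam k r) + ((-k*(1+3*r)/(r^2*(1+r)^3)) / r) * ((x - x0) \<bullet> (x - x0)))"
    by (rule det_rank1)
  show ?thesis unfolding D XX eq by (rule hyp)
qed

lemma h1: fixes a b :: real shows "a \<noteq> 0 \<Longrightarrow> b \<noteq> 0 \<Longrightarrow> 1/b - 1/a + (b - a)/a^2 = (b - a)^2/(b*a^2)"
  by (simp add: field_simps power2_eq_square)

lemma h2: fixes a b k :: real shows "a \<noteq> 0 \<Longrightarrow> b \<noteq> 0 \<Longrightarrow> k/a^2 - k/b^2 = k*(b - a)*(a + b)/(a^2*b^2)"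
  by (simp add: field_simps power2_eq_square)

lemma sup1D:
  fixes r s k :: real
  assumes "r > 0" "s \<ge> 0" "0 \<le> k" "k \<le> 1/2"
  shows "s^2/2 - k/(1+s) \<ge> r^2/2 - k/(1+r) + (r + k/(1+r)^2)*(s - r)"
proof -
  have p1: "1 + r > 0" "1 + s > 0" using assms by auto
  have "s^2/2 - k/(1+s) - (r^2/2 - k/(1+r) + (r + k/(1+r)^2)*(s - r))
      = (s - r)^2/2 - k * (1/(1+s) - 1/(1+r) + (s - r)/(1+r)^2)"
    by (simp add: field_simps power2_eq_square)
  also have "1/(1+s) - 1/(1+r) + (s - r)/(1+r)^2 = (s - r)^2 / ((1+s)*(1+r)^2)"
    using h1[of "1+r" "1+s"] p1 by simp
  also have "(s - r)^2/2 - k * ((s - r)^2 / ((1+s)*(1+r)^2)) = (s - r)^2 * (1/2 - k / ((1+s)*(1+r)^2))"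
    by (simp add: algebra_simps)
  also have "\<dots> \<ge> 0"
  proof -
    have "(1+s)*(1+r)^2 \<ge> 1"
    proof -
      have "(1+r)^2 \<ge> 1" using assms by simp
      moreover have "1 + s \<ge> 1" using assms by simp
      ultimately show ?thesis using mult_mono[of 1 "1+s" 1 "(1+r)^2"] by simp
    qed
    then have "k / ((1+s)*(1+r)^2) \<le> k / 1" using assms by (intro divide_left_mono) auto
    then have "0 \<le> 1/2 - k / ((1+s)*(1+r)^2)" using assms by linarith
    then show ?thesis by (rule mult_nonneg_nonneg[OF zero_le_power2])
  qed
  finally show ?thesis by simp
qed

definition wb :: "real \<Rightarrow> real \<Rightarrow> R3 \<Rightarrow> R3 \<Rightarrow> real" where
  "wb k \<eta> x0 y = (norm y)\<^sup>2 / 2 - k / (1 + norm (y - x0)) - \<eta>"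

lemma quad_id:
  fixes x0 X Y :: R3 and g :: real
  shows "(norm (x0 + Y))\<^sup>2/2 - (norm (x0 + X))\<^sup>2/2 - ((x0 + X) + g *\<^sub>R X) \<bullet> (Y - X)
    = ((norm Y)\<^sup>2 + (norm X)\<^sup>2)/2 - (1 + g) * (X \<bullet> Y) + g * (norm X)\<^sup>2"
  by (simp add: power2_norm_eq_inner inner_add_left inner_add_right inner_diff_left inner_diff_right
      inner_commute field_simps)

lemma supx:
  assumes "x \<noteq> x0" "0 \<le> k" "k \<le> 1/2"
  shows "wb k \<eta> x0 y \<ge> wb k \<eta> x0 x + phi k x0 x \<bullet> (y - x)"
proof -
  define X where "X = x - x0"
  define Y where "Y = y - x0"
  define r where "r = norm X"
  define s where "s = norm Y"
  define g where "g = gam k r"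
  have r: "r > 0" using assms by (simp add: r_def X_def)
  have s: "s \<ge> 0" by (simp add: s_def)
  have g: "g \<ge> 0" using r assms by (simp add: g_def gam_def)
  have gr: "g * r = k / (1+r)^2" using r by (simp add: g_def gam_def power2_eq_square)
  have xe: "x = x0 + X" "y = x0 + Y" by (simp_all add: X_def Y_def)
  have ph: "phi k x0 x = (x0 + X) + g *\<^sub>R X" by (simp add: phi_def X_def r_def g_def)
  have "wb k \<eta> x0 y - wb k \<eta> x0 x - phi k x0 x \<bullet> (y - x)
      = ((norm Y)\<^sup>2 + (norm X)\<^sup>2)/2 - (1 + g) * (X \<bullet> Y) + g * (norm X)\<^sup>2 - k/(1+s) + k/(1+r)"
    unfolding ph using quad_id[of x0 Y X g]
    by (simp add: wb_def xe s_def r_def algebra_simps)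
  also have "\<dots> \<ge> (s^2 + r^2)/2 - (1 + g) * (r * s) + g * r^2 - k/(1+s) + k/(1+r)"
  proof -
    have "X \<bullet> Y \<le> r * s" unfolding r_def s_def by (rule norm_cauchy_schwarz)
    then have "(1 + g) * (X \<bullet> Y) \<le> (1 + g) * (r * s)" using g by (intro mult_left_mono) auto
    then show ?thesis by (simp add: r_def s_def)
  qed
  also have "(s^2 + r^2)/2 - (1 + g) * (r * s) + g * r^2 - k/(1+s) + k/(1+r)
      = (s^2/2 - k/(1+s)) - (r^2/2 - k/(1+r) + (r + g * r)*(s - r))"
    by (simp add: algebra_simps power2_eq_square)
  also have "\<dots> \<ge> 0" unfolding gr using sup1D[OF r s assms(2,3)] by simp
  finally show ?thesis by simp
qed

lemma sup0:
  assumes "norm (p - x0) < k" "0 \<le> k" "k \<le> 1/2"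
  shows "wb k \<eta> x0 y \<ge> wb k \<eta> x0 x0 + p \<bullet> (y - x0)"
proof -
  define Y where "Y = y - x0"
  define s where "s = norm Y"
  have s: "s \<ge> 0" by (simp add: s_def)
  have ye: "y = x0 + Y" by (simp add: Y_def)
  have "wb k \<eta> x0 y - wb k \<eta> x0 x0 - p \<bullet> (y - x0) = s^2/2 - (p - x0) \<bullet> Y + k - k/(1+s)"
    by (simp add: wb_def ye s_def power2_norm_eq_inner inner_add_left inner_add_right inner_diff_left
        inner_commute algebra_simps)
  also have "\<dots> \<ge> s^2/2 - k * s + k - k/(1+s)"
  proof -
    have "(p - x0) \<bullet> Y \<le> norm (p - x0) * s" unfolding s_def by (rule norm_cauchy_schwarz)
    also have "\<dots> \<le> k * s" using assms s by (intro mult_right_mono) auto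
    finally show ?thesis by simp
  qed
  also have "s^2/2 - k * s + k - k/(1+s) = s^2 * (1/2 - k/(1+s))"
    using s by (simp add: field_simps power2_eq_square)
  also have "\<dots> \<ge> 0"
  proof -
    have "k/(1+s) \<le> k/1" using assms s by (intro divide_left_mono) auto
    then have "0 \<le> 1/2 - k/(1+s)" using assms by linarith
    then show ?thesis by (rule mult_nonneg_nonneg[OF zero_le_power2])
  qed
  finally show ?thesis by simp
qed

lemma cancel1: "(r::real) \<noteq> 0 \<Longrightarrow> k/(r*a)*r = k/a" by simp

lemma phi_sub: "phi k x0 x - x0 = (1 + gam k (norm (x - x0))) *\<^sub>R (x - x0)"
  unfolding phi_def by (simp add: algebra_simps)

lemma gam_nonneg: "0 \<le> k \<Longrightarrow> 0 \<le> r \<Longrightarrow> 0 \<le> gam k r"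
  unfolding gam_def by simp

lemma phi_norm:
  fixes x x0 :: R3
  assumes "x \<noteq> x0" "0 \<le> k"
  shows "norm (phi k x0 x - x0) = norm (x - x0) + k / (1 + norm (x - x0))^2"
proof -
  define r where "r = norm (x - x0)"
  have r: "r > 0" using assms by (simp add: r_def)
  have g0: "0 \<le> gam k r" using r assms by (intro gam_nonneg) auto
  have "norm (phi k x0 x - x0) = \<bar>1 + gam k r\<bar> * r" unfolding phi_sub r_def by simp
  also have "\<dots> = (1 + gam k r) * r" using g0 by simp
  also have "\<dots> = r + gam k r * r" by (simp add: algebra_simps)
  also have "gam k r * r = k/(1+r)^2" unfolding gam_def using r by (intro cancel1) simp
  finally show ?thesis by (simp add: r_def)
qed

lemma gfun_mono:
  fixes r s k :: real
  assumes "0 \<le> r" "r < s" "0 \<le> k" "k \<le> 1/2"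
  shows "r + k/(1+r)^2 < s + k/(1+s)^2"
proof -
  have "k/(1+r)^2 - k/(1+s)^2 = k * (s - r) * (2 + r + s) / ((1+r)^2*(1+s)^2)"
    using h2[of "1+r" "1+s" k] assms by (simp add: add.commute add.left_commute)
  also have "\<dots> < s - r"
  proof -
    have d: "(1+r)^2*(1+s)^2 > 0" using assms by simp
    have "k * (2 + r + s) < (1+r)^2*(1+s)^2"
    proof -
      have "k * (2 + r + s) \<le> (2 + r + s)/2" using mult_right_mono[of k "1/2" "2+r+s"] assms by simp
      also have "\<dots> < 1 + r + s" using assms by simp
      also have "1 + r + s \<le> (1+r)*(1+s)" using assms by (simp add: algebra_simps)
      also have "(1+r)*(1+s) \<le> (1+r)^2*(1+s)^2"
      proof -
        have "(1+r)*(1+s) \<ge> 1" using assms by (simp add: algebra_simps add_nonneg_nonneg)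
        then have "(1+r)*(1+s) \<le> ((1+r)*(1+s)) * ((1+r)*(1+s))" using mult_left_mono[of 1 "(1+r)*(1+s)"] by simp
        then show ?thesis by (simp add: power2_eq_square algebra_simps)
      qed
      finally show ?thesis .
    qed
    then have lt: "(s - r) * (k * (2 + r + s)) < (s - r) * ((1+r)^2*(1+s)^2)"
      using assms by (intro mult_strict_left_mono) auto
    have eqk: "k * (s - r) * (2 + r + s) = (s - r) * (k * (2 + r + s))" by (simp add: algebra_simps)
    from lt have "k * (s - r) * (2 + r + s) < (s - r) * ((1+r)^2*(1+s)^2)" unfolding eqk .
    then show ?thesis using d by (simp add: divide_less_eq)
  qed
  finally show ?thesis by linarith
qed

lemma phi_inj:
  assumes "0 \<le> k" "k \<le> 1/2"
  shows "inj_on (phi k x0) (- {x0})"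
proof (rule inj_onI)
  fix x y assume x: "x \<in> - {x0}" and y: "y \<in> - {x0}" and e: "phi k x0 x = phi k x0 y"
  define r where "r = norm (x - x0)"
  define s where "s = norm (y - x0)"
  have r: "r > 0" "s > 0" using x y by (auto simp: r_def s_def)
  have "norm (phi k x0 x - x0) = norm (phi k x0 y - x0)" using e by simp
  then have eq: "r + k/(1+r)^2 = s + k/(1+s)^2"
    using phi_norm[of x x0 k] phi_norm[of y x0 k] x y assms unfolding r_def s_def by simp
  have rs: "r = s"
  proof -
    have "\<not> r < s"
    proof
      assume "r < s"
      then have "r + k/(1+r)^2 < s + k/(1+s)^2" using r assms by (intro gfun_mono) auto
      then show False using eq by linarith
    qed
    moreover have "\<not> s < r"
    proof
      assume "s < r"
      then have "s + k/(1+s)^2 < r + k/(1+r)^2" using r assms by (intro gfun_mono) auto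
      then show False using eq by linarith
    qed
    ultimately show ?thesis by linarith
  qed
  have g0: "0 \<le> gam k r" using r assms by (intro gam_nonneg) auto
  have A: "phi k x0 x - x0 = (1 + gam k r) *\<^sub>R (x - x0)" using phi_sub[of k x0 x] by (simp add: r_def)
  have B: "phi k x0 y - x0 = (1 + gam k r) *\<^sub>R (y - x0)" using phi_sub[of k x0 y] by (simp add: rs s_def)
  have "(1 + gam k r) *\<^sub>R (x - x0) = phi k x0 x - x0" by (rule A[symmetric])
  also have "\<dots> = phi k x0 y - x0" by (simp only: e)
  also have "\<dots> = (1 + gam k r) *\<^sub>R (y - x0)" by (rule B)
  finally have "(1 + gam k r) *\<^sub>R (x - x0) = (1 + gam k r) *\<^sub>R (y - x0)" .
  moreover have "1 + gam k r \<noteq> 0" using g0 by linarith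
  ultimately have "x - x0 = y - x0" by simp
  then show "x = y" by simp
qed

lemma phi_meas:
  fixes T :: "R3 set"
  assumes T: "open T" "bounded T" "x0 \<notin> T" and k: "0 < k" "k \<le> 1/2"
  shows "phi k x0 ` T \<in> lmeasurable" "measure lebesgue T \<le> measure lebesgue (phi k x0 ` T)"
proof -
  define D where "D x = (\<lambda>h. (1 + gam k (norm (x - x0))) *\<^sub>R h +
     ((-k*(1+3*norm (x - x0))/((norm (x - x0))^2*(1+norm (x - x0))^3)) / norm (x - x0) * ((x - x0) \<bullet> h)) *\<^sub>R (x - x0))" for x
  have xne: "x \<in> T \<Longrightarrow> x \<noteq> x0" for x using T by auto
  have der: "(phi k x0 has_derivative D x) (at x within T)" if "x \<in> T" for x
    using phi_deriv[OF xne[OF that], of k] unfolding D_def by (rule has_derivative_at_withinI)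
  have cont: "continuous_on T (phi k x0)" using der by (rule has_derivative_continuous_on)
  have inj: "inj_on (phi k x0) T" using phi_inj[of k x0] k T by (auto intro: inj_on_subset)
  have op: "open (phi k x0 ` T)" using cont T(1) inj by (rule invariance_of_domain)
  obtain B where B: "\<And>x. x \<in> T \<Longrightarrow> norm x \<le> B" using T(2) by (auto simp: bounded_iff)
  have "phi k x0 ` T \<subseteq> cball x0 (B + norm x0 + k)"
  proof
    fix y assume "y \<in> phi k x0 ` T"
    then obtain x where x: "x \<in> T" "y = phi k x0 x" by auto
    have "norm (y - x0) = norm (x - x0) + k / (1 + norm (x - x0))^2"
      using phi_norm[OF xne[OF x(1)], of k] k x by simp
    also have "k / (1 + norm (x - x0))^2 \<le> k / 1"
    proof -
      have "1 \<le> 1 + norm (x - x0)" by simp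
      then have n2: "1 \<le> (1 + norm (x - x0))^2" by (rule one_le_power)
      have n3: "0 < (1 + norm (x - x0))^2 * 1" using n2 by linarith
      show ?thesis using divide_left_mono[OF n2 _ n3] k by simp
    qed
    also have "norm (x - x0) \<le> B + norm x0" using B[OF x(1)] norm_triangle_ineq4[of x x0] by linarith
    finally show "y \<in> cball x0 (B + norm x0 + k)" by (simp add: dist_norm norm_minus_commute)
  qed
  then have bd: "bounded (phi k x0 ` T)" by (rule bounded_subset[OF bounded_cball])
  show lm: "phi k x0 ` T \<in> lmeasurable" using bd op by (rule lmeasurable_open)
  have Tl: "T \<in> lmeasurable" using T by (intro lmeasurable_open) auto
  have Ts: "T \<in> sets lebesgue" using Tl by auto
  have intg: "(\<lambda>x. \<bar>det (matrix (D x))\<bar>) integrable_on T"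
    using measurable_differentiable_image_eq[OF Ts der inj] lm by simp
  have meq: "measure lebesgue (phi k x0 ` T) = integral T (\<lambda>x. \<bar>det (matrix (D x))\<bar>)"
    by (rule measure_differentiable_image_eq[OF Ts der inj intg])
  have "measure lebesgue T = integral T (\<lambda>x. 1::real)" using Tl by (rule lmeasure_integral)
  also have "\<dots> \<le> integral T (\<lambda>x. \<bar>det (matrix (D x))\<bar>)"
  proof (rule integral_le)
    show "(\<lambda>x. 1::real) integrable_on T" using Tl by (rule integrable_on_const)
    show "(\<lambda>x. \<bar>det (matrix (D x))\<bar>) integrable_on T" by (rule intg)
    fix x assume "x \<in> T"
    then have "1 \<le> det (matrix (D x))" unfolding D_def using phi_det[OF xne, of x k] k by auto
    then show "1 \<le> \<bar>det (matrix (D x))\<bar>" by simp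
  qed
  finally show "measure lebesgue T \<le> measure lebesgue (phi k x0 ` T)" using meq by simp
qed

locale asol =
  fixes eps :: real and U :: "R3 \<Rightarrow> real"
  assumes eps: "eps > 0" and sol: "alexandrov_sol eps U"
    and asym: "((\<lambda>x. U x - (norm x)\<^sup>2 / 2) \<longlongrightarrow> 0) at_infinity"
begin

lemma conv: "convex_on UNIV U" using sol by (simp add: alexandrov_sol_def)

lemma cont: "continuous_on UNIV U"
  using convex_on_continuous[OF open_UNIV conv] .

lemma asymR: assumes "\<eta> > 0" shows "\<exists>R. \<forall>x. R \<le> norm x \<longrightarrow> \<bar>U x - (norm x)\<^sup>2 / 2\<bar> < \<eta>"
proof -
  have "\<forall>\<^sub>F x in at_infinity. dist (U x - (norm x)\<^sup>2 / 2) 0 < \<eta>"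
    using asym assms by (rule tendstoD)
  then show ?thesis by (auto simp: eventually_at_infinity dist_real_def)
qed

lemma minimizer: "\<exists>z. \<forall>y. U z - p \<bullet> z \<le> U y - p \<bullet> y"
proof -
  obtain R1 where R1: "\<And>x. R1 \<le> norm x \<Longrightarrow> \<bar>U x - (norm x)\<^sup>2 / 2\<bar> < 1"
    using asymR[of 1] by auto
  define R where "R = max R1 (2 * norm p + 2 + 2 * \<bar>U 0\<bar>)"
  have Rp: "R \<ge> 0" by (simp add: R_def le_max_iff_disj)
  have "\<exists>z\<in>cball 0 R. \<forall>y\<in>cball 0 R. U z - p \<bullet> z \<le> U y - p \<bullet> y"
    by (rule continuous_attains_inf)
       (use Rp in \<open>auto intro!: continuous_intros continuous_on_subset[OF cont]\<close>)
  then obtain z where z: "z \<in> cball 0 R" and zmin: "\<And>y. y \<in> cball 0 R \<Longrightarrow> U z - p \<bullet> z \<le> U y - p \<bullet> y"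
    by blast
  have R0: "0 \<in> cball 0 R" using Rp by simp
  show ?thesis
  proof (intro exI allI)
    fix y
    show "U z - p \<bullet> z \<le> U y - p \<bullet> y"
    proof (cases "y \<in> cball 0 R")
      case True then show ?thesis by (rule zmin)
    next
      case False
      then have ny: "norm y > R" by simp
      then have "R1 \<le> norm y" by (simp add: R_def)
      then have "U y > (norm y)\<^sup>2 / 2 - 1" using R1 by fastforce
      moreover have "p \<bullet> y \<le> norm p * norm y" by (rule norm_cauchy_schwarz)
      moreover have "(norm y)\<^sup>2 / 2 - 1 - norm p * norm y \<ge> \<bar>U 0\<bar>"
      proof -
        have h: "norm y \<ge> 2 * norm p + 2 + 2 * \<bar>U 0\<bar>" using ny by (simp add: R_def)
        have "(norm y)\<^sup>2 / 2 - norm p * norm y = norm y * (norm y / 2 - norm p)"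
          by (simp add: power2_eq_square algebra_simps)
        also have "\<dots> \<ge> norm y * (1 + \<bar>U 0\<bar>)"
          using h by (intro mult_left_mono) auto
        also have "norm y * (1 + \<bar>U 0\<bar>) \<ge> 2 * (1 + \<bar>U 0\<bar>)"
          using h norm_ge_zero[of p] abs_ge_zero[of "U 0"] by (intro mult_right_mono) linarith+
        finally have "2 * (1 + \<bar>U 0\<bar>) \<le> (norm y)\<^sup>2 / 2 - norm p * norm y" .
        then show ?thesis using abs_ge_zero[of "U 0"] by (smt (verit))
      qed
      ultimately have "U y - p \<bullet> y > U 0 - p \<bullet> 0" by simp
      moreover have "U z - p \<bullet> z \<le> U 0 - p \<bullet> 0" using zmin[OF R0] .
      ultimately show ?thesis by linarith
    qed
  qed
qed

lemma incl:
  assumes S: "S = {y. U y < w y}" and x: "x \<in> S"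
    and p: "\<And>y. w y \<ge> w x + p \<bullet> (y - x)"
  shows "p \<in> subdiff_set U S"
proof -
  obtain z where z: "\<And>y. U z - p \<bullet> z \<le> U y - p \<bullet> y" using minimizer by blast
  have "U z - p \<bullet> z \<le> U x - p \<bullet> x" by (rule z)
  also have "U x - p \<bullet> x < w x - p \<bullet> x" using x S by simp
  also have "w x - p \<bullet> x \<le> w z - p \<bullet> z" using p[of z] by (simp add: inner_diff_right)
  finally have "z \<in> S" using S by simp
  moreover have "p \<in> subdiff U z"
    unfolding subdiff_def using z by (auto simp: inner_diff_right algebra_simps)
  ultimately show ?thesis unfolding subdiff_set_def by blast
qed

lemma meas:
  assumes "bounded E" "open E"
  shows "subdiff_set U E \<in> lmeasurable"
    and "measure lebesgue E \<le> measure lebesgue (subdiff_set U E)"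
    and "measure lebesgue (subdiff_set U E) \<le> measure lebesgue E + 2 * eps"
proof -
  have Eb: "E \<in> sets borel" using assms(2) by simp
  have El: "E \<in> lmeasurable" using assms by (rule lmeasurable_open)
  have Sm: "subdiff_set U E \<in> sets lebesgue" and
     eq: "emeasure lebesgue (subdiff_set U E) =
          emeasure lebesgue E + ennreal eps * (indicator E e3 + indicator E (- e3))"
    using sol Eb by (auto simp: alexandrov_sol_def)
  define i where "i = (indicator E e3 + indicator E (- e3) :: real)"
  have i: "0 \<le> i" "i \<le> 2" by (auto simp: i_def indicator_def)
  have ii: "(indicator E e3 + indicator E (- e3) :: ennreal) = ennreal i"
    by (simp add: i_def indicator_def)
  have eq2: "emeasure lebesgue (subdiff_set U E) = ennreal (measure lebesgue E + eps * i)"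
    unfolding eq ii emeasure_eq_measure2[OF El]
    using eps i by (simp add: ennreal_mult' ennreal_plus)
  show fm: "subdiff_set U E \<in> lmeasurable"
    using Sm eq2 by (intro fmeasurableI) auto
  have "ennreal (measure lebesgue (subdiff_set U E)) = ennreal (measure lebesgue E + eps * i)"
    using eq2 emeasure_eq_measure2[OF fm] by metis
  then have mq: "measure lebesgue (subdiff_set U E) = measure lebesgue E + eps * i"
    using eps i measure_nonneg[of lebesgue E] measure_nonneg[of lebesgue "subdiff_set U E"]
    by (subst (asm) ennreal_inj) auto
  show "measure lebesgue E \<le> measure lebesgue (subdiff_set U E)"
    using mq eps i by simp
  show "measure lebesgue (subdiff_set U E) \<le> measure lebesgue E + 2 * eps"
    using mq eps i by (simp add: mult_left_le)
qed


lemma pos_measure_open: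
  assumes "open S" "bounded S" "x \<in> S"
  shows "measure lebesgue S > 0"
proof -
  obtain e where e: "e > 0" "ball x e \<subseteq> S" using assms open_contains_ball by blast
  have "0 < measure lborel (ball x e)" using e(1) by (rule content_ball_pos)
  also have "measure lborel (ball x e) = measure lebesgue (ball x e)" by simp
  also have "measure lebesgue (ball x e) \<le> measure lebesgue S"
    using e assms by (intro measure_mono_fmeasurable) (auto intro: lmeasurable_open)
  finally show ?thesis .
qed

lemma upper: "U x0 \<le> (norm x0)\<^sup>2 / 2"
proof (rule ccontr)
  assume A: "\<not> U x0 \<le> (norm x0)\<^sup>2 / 2"
  define \<eta> where "\<eta> = (U x0 - (norm x0)\<^sup>2 / 2) / 3"
  have \<eta>: "\<eta> > 0" using A by (simp add: \<eta>_def)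
  obtain R0 where R0: "\<And>x. R0 \<le> norm x \<Longrightarrow> \<bar>U x - (norm x)\<^sup>2 / 2\<bar> < \<eta>"
    using asymR[OF \<eta>] by auto
  define R where "R = max R0 (norm x0 + 1)"
  have R: "R \<ge> 1" "norm x0 < R" "R0 \<le> R" by (auto simp: R_def le_max_iff_disj)
  define \<delta> where "\<delta> = min (1/2) (2*\<eta>/R^2)"
  have R2: "R^2 > 0" using R by simp
  have \<delta>: "\<delta> > 0" "\<delta> \<le> 1/2" "\<delta> * R^2 / 2 \<le> \<eta>"
  proof -
    show "\<delta> > 0" using \<eta> R2 by (simp add: \<delta>_def)
    show "\<delta> \<le> 1/2" by (simp add: \<delta>_def)
    have "\<delta> \<le> 2*\<eta>/R^2" by (simp add: \<delta>_def)
    then have "\<delta> * R^2 \<le> 2*\<eta>" using R2 by (simp add: le_divide_eq)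
    then show "\<delta> * R^2 / 2 \<le> \<eta>" by simp
  qed
  define a where "a = 1 - \<delta>"
  have a: "0 < a" "a < 1" using \<delta> by (auto simp: a_def)
  define w where "w y = a * ((norm y)\<^sup>2 / 2) + \<eta> + \<delta> * R^2 / 2" for y :: R3
  define S where "S = {y. norm y < R \<and> w y < U y}"
  have x0S: "x0 \<in> S"
  proof -
    have "w x0 = (norm x0)\<^sup>2 / 2 - \<delta> * ((norm x0)\<^sup>2 / 2) + \<eta> + \<delta> * R^2 / 2"
      by (simp add: w_def a_def field_simps)
    also have "\<dots> \<le> (norm x0)\<^sup>2 / 2 + 2 * \<eta>"
    proof -
      have "0 \<le> \<delta> * ((norm x0)\<^sup>2 / 2)" using \<delta> by simp
      then show ?thesis using \<delta> by linarith
    qed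
    also have "\<dots> < U x0"
    proof -
      have "\<eta> * 3 = U x0 - (norm x0)\<^sup>2 / 2" by (simp add: \<eta>_def)
      then show ?thesis using \<eta> by linarith
    qed
    finally show ?thesis using R by (simp add: S_def)
  qed
  have wc: "continuous_on UNIV w" unfolding w_def[abs_def] by (intro continuous_intros) auto
  have Sop: "open S"
  proof -
    have "S = ball 0 R \<inter> {y. w y < U y}" by (auto simp: S_def)
    then show ?thesis using open_Collect_less[OF wc cont] by auto
  qed
  have Sbd: "bounded S" by (rule bounded_subset[OF bounded_ball[of 0 R]]) (auto simp: S_def)
  have incl: "subdiff_set U S \<subseteq> (\<lambda>x. a *\<^sub>R x) ` S"
  proof
    fix p assume "p \<in> subdiff_set U S"
    then obtain z where zS: "z \<in> S" and pz: "\<And>y. U y \<ge> U z + p \<bullet> (y - z)"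
      by (auto simp: subdiff_set_def subdiff_def)
    define ys where "ys = (1/a) *\<^sub>R p"
    have pys: "p = a *\<^sub>R ys" using a by (simp add: ys_def)
    define F where "F y = U z + p \<bullet> (y - z) - w y" for y
    have Fq: "F y = F ys - a/2 * (norm (y - ys))\<^sup>2" for y
      unfolding F_def w_def pys
      by (simp add: power2_norm_eq_inner inner_diff_left inner_diff_right inner_commute algebra_simps)
    have Fz: "F z > 0" using zS by (simp add: S_def F_def)
    have Fys: "F ys \<ge> F z" using Fq[of z] a by simp
    have nys: "norm ys < R"
    proof (rule ccontr)
      assume "\<not> norm ys < R"
      have c: "continuous_on {0..1} (\<lambda>t. norm (z + t *\<^sub>R (ys - z)))" by (intro continuous_intros)
      have "norm (z + 0 *\<^sub>R (ys - z)) \<le> R" using zS by (simp add: S_def)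
      moreover have "R \<le> norm (z + 1 *\<^sub>R (ys - z))" using \<open>\<not> norm ys < R\<close> by simp
      ultimately obtain t where t: "0 \<le> t" "t \<le> 1" "norm (z + t *\<^sub>R (ys - z)) = R"
        using IVT'[of "\<lambda>t. norm (z + t *\<^sub>R (ys - z))" 0 R 1] c by auto
      define yt where "yt = z + t *\<^sub>R (ys - z)"
      have "yt - ys = (1 - t) *\<^sub>R (z - ys)" by (simp add: yt_def algebra_simps)
      then have "norm (yt - ys) = (1 - t) * norm (z - ys)" using t by simp
      then have "(norm (yt - ys))\<^sup>2 \<le> (norm (z - ys))\<^sup>2"
        using t by (simp add: power_mult_distrib mult_left_le_one_le power_le_one)
      then have "F yt \<ge> F z" using Fq[of yt] Fq[of z] a by (simp add: mult_left_mono)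
      moreover have "U yt < w yt"
      proof -
        have "norm yt = R" using t by (simp add: yt_def)
        then have "\<bar>U yt - (norm yt)\<^sup>2 / 2\<bar> < \<eta>" using R0 R by auto
        moreover have "w yt = (norm yt)\<^sup>2 / 2 + \<eta>"
          using \<open>norm yt = R\<close> by (simp add: w_def a_def field_simps)
        ultimately show ?thesis by linarith
      qed
      moreover have "F yt \<le> U yt - w yt" using pz[of yt] by (simp add: F_def)
      ultimately show False using Fz by linarith
    qed
    have "U ys > w ys" using pz[of ys] Fys Fz by (simp add: F_def)
    then have "ys \<in> S" using nys by (simp add: S_def)
    then show "p \<in> (\<lambda>x. a *\<^sub>R x) ` S" using pys by blast
  qed
  have Sl: "S \<in> lmeasurable" using Sbd Sop by (rule lmeasurable_open)
  have aS: "(\<lambda>x. a *\<^sub>R x) ` S \<in> lmeasurable"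
    using Sbd Sop a by (intro lmeasurable_open bounded_scaling open_scaling) auto
  have maS: "measure lebesgue ((\<lambda>x. a *\<^sub>R x) ` S) = a^3 * measure lebesgue S"
    using measure_lebesgue_affine[of a 0 S] a by simp
  have "measure lebesgue S \<le> measure lebesgue (subdiff_set U S)" by (rule meas(2)[OF Sbd Sop])
  also have "\<dots> \<le> measure lebesgue ((\<lambda>x. a *\<^sub>R x) ` S)"
    using incl meas(1)[OF Sbd Sop] aS by (intro measure_mono_fmeasurable) auto
  also have "\<dots> = a^3 * measure lebesgue S" by (rule maS)
  finally have "measure lebesgue S \<le> a^3 * measure lebesgue S" .
  moreover have "measure lebesgue S > 0" using Sop Sbd x0S by (rule pos_measure_open)
  moreover have "a^3 < 1" using a by (simp add: power_less_one_iff)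
  ultimately show False by (simp add: mult_le_cancel_right2)
qed

lemma lower:
  assumes k: "0 < k" "k \<le> 1/2" and small: "2 * eps < measure lebesgue (ball (0::R3) k)"
  shows "(norm x0)\<^sup>2 / 2 - U x0 \<le> k"
proof (rule ccontr)
  assume A: "\<not> (norm x0)\<^sup>2 / 2 - U x0 \<le> k"
  define \<eta> where "\<eta> = ((norm x0)\<^sup>2 / 2 - U x0 - k) / 2"
  have \<eta>: "\<eta> > 0" using A by (simp add: \<eta>_def)
  define w where "w = wb k \<eta> x0"
  define S where "S = {y. U y < w y}"
  have x0S: "x0 \<in> S"
  proof -
    have "w x0 = (norm x0)\<^sup>2 / 2 - k - \<eta>" by (simp add: w_def wb_def)
    moreover have "\<eta> * 2 = (norm x0)\<^sup>2 / 2 - U x0 - k" by (simp add: \<eta>_def)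
    ultimately have "U x0 < w x0" using \<eta> by linarith
    then show ?thesis by (simp add: S_def)
  qed
  have wc: "continuous_on UNIV w"
  proof -
    have "\<And>y. 1 + norm (y - x0) \<noteq> 0"
      by (metis add_pos_nonneg norm_ge_zero zero_less_one order_less_irrefl)
    then show ?thesis unfolding w_def wb_def[abs_def] by (intro continuous_intros) auto
  qed
  have Sop: "open S" unfolding S_def using cont wc by (rule open_Collect_less)
  obtain R where R: "\<And>x. R \<le> norm x \<Longrightarrow> \<bar>U x - (norm x)\<^sup>2 / 2\<bar> < \<eta>"
    using asymR[OF \<eta>] by auto
  have Sbd: "bounded S"
  proof (rule bounded_subset[OF bounded_ball[of 0 R]])
    show "S \<subseteq> ball 0 R"
    proof
      fix y assume y: "y \<in> S"
      show "y \<in> ball 0 R"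
      proof (rule ccontr)
        assume "y \<notin> ball 0 R"
        then have "R \<le> norm y" by simp
        then have "U y > (norm y)\<^sup>2 / 2 - \<eta>" using R by fastforce
        moreover have "w y \<le> (norm y)\<^sup>2 / 2 - \<eta>"
        proof -
          have "0 \<le> k / (1 + norm (y - x0))" using k by simp
          then show ?thesis by (simp add: w_def wb_def)
        qed
        ultimately show False using y by (simp add: S_def)
      qed
    qed
  qed
  define T where "T = S - {x0}"
  have Top: "open T" using Sop by (simp add: T_def open_delete)
  have Tbd: "bounded T" using Sbd by (simp add: T_def bounded_subset)
  have x0T: "x0 \<notin> T" by (simp add: T_def)
  have B: "ball x0 k \<subseteq> subdiff_set U S"
  proof
    fix p assume "p \<in> ball x0 k"
    then have "norm (p - x0) < k" by (simp add: dist_norm norm_minus_commute)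
    then have "\<And>y. w y \<ge> w x0 + p \<bullet> (y - x0)" unfolding w_def using sup0 k by auto
    then show "p \<in> subdiff_set U S" using incl[OF S_def x0S] by blast
  qed
  have P: "phi k x0 ` T \<subseteq> subdiff_set U S"
  proof
    fix q assume "q \<in> phi k x0 ` T"
    then obtain x where x: "x \<in> T" "q = phi k x0 x" by auto
    have xS: "x \<in> S" "x \<noteq> x0" using x by (auto simp: T_def)
    then have "\<And>y. w y \<ge> w x + phi k x0 x \<bullet> (y - x)" unfolding w_def using supx k by auto
    then show "q \<in> subdiff_set U S" using incl[OF S_def xS(1)] x by blast
  qed
  have D: "ball x0 k \<inter> phi k x0 ` T = {}"
  proof -
    have "norm (phi k x0 x - x0) \<ge> k" if "x \<in> T" for x
    proof -
      have xne: "x \<noteq> x0" using that by (auto simp: T_def)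
      define r where "r = norm (x - x0)"
      have r: "r > 0" using xne by (simp add: r_def)
      have "k \<le> r + k / (1 + r)^2"
      proof -
        have "k * (1 + r)^2 \<le> k * r * (2 + r) + k" by (simp add: power2_eq_square algebra_simps)
        have "k - k / (1+r)^2 = k * r * (2 + r) / (1 + r)^2"
        proof -
          have "(1+r)^2 \<noteq> 0" using r by simp
          then show ?thesis by (simp add: field_simps power2_eq_square)
        qed
        also have "\<dots> \<le> r"
        proof -
          have "k * (2 + r) \<le> (1 + r)^2"
          proof -
            have "k * (2 + r) \<le> (2 + r) / 2" using mult_right_mono[of k "1/2" "2+r"] k r by simp
            also have "\<dots> \<le> (1 + r)^2" using r by (simp add: power2_eq_square field_simps)
            finally show ?thesis .
          qed
          then have "k * r * (2 + r) \<le> r * (1 + r)^2" using r by (simp add: mult.commute mult.left_commute mult_left_mono)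
          moreover have "(1+r)^2 > 0" using r by simp
          ultimately show ?thesis by (simp add: divide_le_eq)
        qed
        finally show ?thesis by linarith
      qed
      then show ?thesis using phi_norm[OF xne, of k] k by (simp add: r_def)
    qed
    then show ?thesis by (auto simp: dist_norm norm_minus_commute) (meson not_le)
  qed
  have Tl: "T \<in> lmeasurable" using Tbd Top by (rule lmeasurable_open)
  have Bl: "ball x0 k \<in> lmeasurable" by (rule lmeasurable_ball)
  have PT: "phi k x0 ` T \<in> lmeasurable" "measure lebesgue T \<le> measure lebesgue (phi k x0 ` T)"
    using phi_meas[OF Top Tbd x0T k] by auto
  have mS: "measure lebesgue T = measure lebesgue S"
  proof -
    have n: "{x0} \<in> null_sets lebesgue" using negligible_iff_null_sets negligible_sing by blast
    have m: "S \<in> sets lebesgue" using Sop by simp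
    show ?thesis unfolding T_def by (rule measure_Diff_null_set[OF m n])
  qed
  have mB: "measure lebesgue (ball x0 k) = measure lebesgue (ball (0::R3) k)"
    using content_ball_conv_unit_ball[of k x0] content_ball_conv_unit_ball[of k "0::R3"] k by simp
  have "measure lebesgue (ball x0 k \<union> phi k x0 ` T) = measure lebesgue (ball x0 k) + measure lebesgue (phi k x0 ` T)"
    using Bl PT(1) D by (intro measure_Union) (auto simp: fmeasurable_def)
  also have "\<dots> \<ge> measure lebesgue (ball (0::R3) k) + measure lebesgue S" using mB mS PT(2) by simp
  also have "measure lebesgue (ball x0 k \<union> phi k x0 ` T) \<le> measure lebesgue (subdiff_set U S)"
    using B P meas(1)[OF Sbd Sop] Bl PT(1) by (intro measure_mono_fmeasurable) auto
  also have "\<dots> \<le> measure lebesgue S + 2 * eps" by (rule meas(3)[OF Sbd Sop])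
  finally show False using small by linarith
qed
end

theorem mainTheorem8:
  fixes u :: "real \<Rightarrow> R3 \<Rightarrow> real"
  assumes sol: "\<And>eps. eps > 0 \<Longrightarrow> alexandrov_sol eps (u eps)"
      and asym: "\<And>eps. eps > 0 \<Longrightarrow>
                   ((\<lambda>x. u eps x - (norm x)\<^sup>2 / 2) \<longlongrightarrow> 0) at_infinity"
  shows "(\<forall>K. compact K \<longrightarrow> uniform_limit K u (\<lambda>x. (norm x)\<^sup>2 / 2) (at_right 0))
       \<and> (\<forall>\<^sub>F eps in at_right 0.
            \<not> (\<exists>a b. \<forall>x\<in>closed_segment (- e3) e3. u eps x = a \<bullet> x + b))"
proof -
  have A: "asol eps (u eps)" if "eps > 0" for eps
    using that sol[OF that] asym[OF that] by unfold_locales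
  have key: "\<forall>\<^sub>F eps in at_right 0. \<forall>x. \<bar>u eps x - (norm x)\<^sup>2 / 2\<bar> \<le> k"
    if k: "0 < k" "k \<le> 1/2" for k
  proof -
    define \<mu> where "\<mu> = measure lebesgue (ball (0::R3) k)"
    have "0 < measure lborel (ball (0::R3) k)" using k(1) by (rule content_ball_pos)
    then have \<mu>: "\<mu> > 0" by (simp add: \<mu>_def)
    show ?thesis unfolding eventually_at_right_field
    proof (intro exI conjI allI impI)
      show "(0::real) < \<mu> / 2" using \<mu> by simp
      fix eps x :: real
      fix x :: R3
      assume e: "0 < eps" "eps < \<mu> / 2"
      interpret asol eps "u eps" by (rule A[OF e(1)])
      have "u eps x \<le> (norm x)\<^sup>2 / 2" by (rule upper)
      moreover have "(norm x)\<^sup>2 / 2 - u eps x \<le> k"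
        using k e by (intro lower) (auto simp: \<mu>_def)
      ultimately show "\<bar>u eps x - (norm x)\<^sup>2 / 2\<bar> \<le> k" by linarith
    qed
  qed
  have P1: "uniform_limit K u (\<lambda>x. (norm x)\<^sup>2 / 2) (at_right 0)" for K :: "R3 set"
  proof (rule uniform_limitI)
    fix e :: real assume e: "e > 0"
    define k where "k = min (e/2) (1/2)"
    have k: "0 < k" "k \<le> 1/2" "k < e" using e by (auto simp: k_def)
    show "\<forall>\<^sub>F n in at_right 0. \<forall>x\<in>K. dist (u n x) ((norm x)\<^sup>2 / 2) < e"
      using key[OF k(1,2)]
    proof eventually_elim
      case (elim n)
      show ?case
      proof
        fix x assume "x \<in> K"
        have "\<bar>u n x - (norm x)\<^sup>2 / 2\<bar> \<le> k" using elim by blast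
        then show "dist (u n x) ((norm x)\<^sup>2 / 2) < e" using k(3) by (simp add: dist_real_def)
      qed
    qed
  qed
  have K8: "\<forall>\<^sub>F eps in at_right 0. \<forall>x. \<bar>u eps x - (norm x)\<^sup>2 / 2\<bar> \<le> 1/8"
    by (rule key) auto
  have P2: "\<forall>\<^sub>F eps in at_right 0. \<not> (\<exists>a b. \<forall>x\<in>closed_segment (- e3) e3. u eps x = a \<bullet> x + b)"
    using K8
  proof eventually_elim
    case (elim eps)
    show ?case
    proof
      assume "\<exists>a b. \<forall>x\<in>closed_segment (- e3) e3. u eps x = a \<bullet> x + b"
      then obtain a b where ab: "\<And>x. x \<in> closed_segment (- e3) e3 \<Longrightarrow> u eps x = a \<bullet> x + b" by blast
      have m: "(0::R3) \<in> closed_segment (- e3) e3"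
        using midpoint_in_closed_segment[of "- e3" e3] by (simp add: midpoint_def)
      have u1: "u eps e3 = a \<bullet> e3 + b" using ab by auto
      have u2: "u eps (- e3) = - (a \<bullet> e3) + b" using ab by auto
      have u0: "u eps 0 = b" using ab[OF m] by simp
      have n: "norm e3 = 1" by (simp add: e3_def)
      have "\<bar>u eps e3 - 1/2\<bar> \<le> 1/8" "\<bar>u eps (- e3) - 1/2\<bar> \<le> 1/8" "\<bar>u eps 0\<bar> \<le> 1/8"
        using elim[rule_format, of e3] elim[rule_format, of "- e3"] elim[rule_format, of 0] n by auto
      then show False using u1 u2 u0 by linarith
    qed
  qed
  show ?thesis using P1 P2 by blast
qed

end
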